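(* Let $m>n$ and let $\mathbf{A}\in\mathbb{R}^{m\times n}$ have rank $n$, partitioned by rows as $\mathbf{A} = \begin{bmatrix}\mathbf{X}\\ \mathbf{Y}\end{bmatrix}$ with $\mathbf{X}\in\mathbb{R}^{n\times n}$ invertible (the top $n$ rows form a full-rank square matrix) and $\mathbf{Y}\in\mathbb{R}^{(m-n)\times n}$. Let $\mathbf{A} = \mathbf{L}\mathbf{Q}$ be its LQ decomposition with $\mathbf{Q}\in\mathbb{R}^{n\times n}$ orthogonal and $\mathbf{L}\in\mathbb{R}^{m\times n}$ lower triangular, partitioned as $\mathbf{L} = \begin{bmatrix}\mathbf{U}\\ \mathbf{V}\end{bmatrix}$ with $\mathbf{U}\in\mathbb{R}^{n\times n}$ (lower triangular, invertible, $\mathbf{X} = \mathbf{U}\mathbf{Q}$) and $\mathbf{V}\in\mathbb{R}^{(m-n)\times n}$ ($\mathbf{Y} = \mathbf{V}\mathbf{Q}$). Suppose $\mathbf{A}'\mapsto(\mathbf{L}(\mathbf{A}'),\mathbf{Q}(\mathbf{A}'))$ is a differentiable map on a neighborhood of $\mathbf{A}$ giving such a decomposition for each $\mathbf{A}'$ (e.g. normalized so $\mathbf{L}$ has positive diagonal). Let $\bar{\mathbf{Q}}\in\mathbb{R}^{n\times n}$ and $\bar{\mathbf{L}} = \begin{bmatrix}\bar{\mathbf{U}}\\ \bar{\mathbf{V}}\end{bmatrix}\in\mathbb{R}^{m\times n}$ be arbitrary upstream gradients, with $\bar{\mathbf{U}}\in\mathbb{R}^{n\times n}$, $\bar{\mathbf{V}}\in\mathbb{R}^{(m-n)\times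 n}$. Then the reverse-mode gradient is $\bar{\mathbf{A}} = \begin{bmatrix}\bar{\mathbf{X}}\\ \bar{\mathbf{Y}}\end{bmatrix}$ with $$\bar{\mathbf{X}} = \mathbf{U}^{-T}\left[\bar{\mathbf{Q}}_{prime} + \mathrm{copyltu}(\mathbf{M})\mathbf{Q}\right],\qquad \bar{\mathbf{Y}} = \bar{\mathbf{V}}\mathbf{Q},$$ where $\bar{\mathbf{Q}}_{prime} = \bar{\mathbf{Q}} + \bar{\mathbf{V}}^T\mathbf{Y}$ and $\mathbf{M} = \mathbf{U}^T\bar{\mathbf{U}} - \bar{\mathbf{Q}}_{prime}\mathbf{Q}^T$.
   Context: Reverse-mode gradient: given a differentiable map $\mathbf{A}\mapsto(\mathbf{L}(\mathbf{A}),\mathbf{Q}(\mathbf{A}))$ and upstream matrices $\bar{\mathbf{L}},\bar{\mathbf{Q}}$ of the same shapes as $\mathbf{L},\mathbf{Q}$, the gradient $\bar{\mathbf{A}}$ is the unique matrix of the shape of $\mathbf{A}$ such that $\mathrm{Tr}(\bar{\mathbf{A}}^T d\mathbf{A}) = \mathrm{Tr}(\bar{\mathbf{L}}^T d\mathbf{L}) + \mathrm{Tr}(\bar{\mathbf{Q}}^T d\mathbf{Q})$ for every direction $d\mathbf{A}$, where $d\mathbf{L}, d\mathbf{Q}$ are the directional derivatives of $\mathbf{L},\mathbf{Q}$ at $\mathbf{A}$ in direction $d\mathbf{A}$. For a square matrix $\mathbf{M}$, $\mathrm{copyltu}(\mathbf{M})$ is the symmetric matrix with entries $\mathrm{copyltu}(\mathbf{M})_{ij}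 = \mathbf{M}_{\max(i,j),\min(i,j)}$; equivalently $\mathrm{copyltu}(\mathbf{M}) = \mathrm{sym}(\mathbf{M}\circ\mathbf{E})$, where $\mathrm{sym}(\mathbf{B}) = (\mathbf{B}+\mathbf{B}^T)/2$, $\circ$ is the Hadamard product and $\mathbf{E}$ has $e_{ij}=0$ if $i<j$, $1$ if $i=j$, $2$ if $i>j$. $\mathbf{U}^{-T} = (\mathbf{U}^{-1})^T$. *)

theory Defs
  imports "HOL-Analysis.Analysis"
begin

definition lower_triangular :: "real^('n::{finite,linorder})^('n::{finite,linorder}) \<Rightarrow> bool" where
  "lower_triangular U \<longleftrightarrow>
     (\<forall>i j. i < j \<longrightarrow> U $ i $ j = 0)"

definition copyltu :: "real^('n::{finite,linorder})^('n::{finite,linorder}) \<Rightarrow> real^('n::{finite,linorder})^('n::{finite,linorder})" where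
  "copyltu M = (\<chi> i j. M $ (max i j) $ (min i j))"

text \<open>LQ decomposition of the block matrix A = [X; Y] (X square, n x n; Y of size (m-n) x n):
  L = [U; V] lower triangular (i.e. U lower triangular), Q orthogonal, X = U Q, Y = V Q.\<close>
definition is_LQ_block ::
  "real^('n::{finite,linorder})^('n::{finite,linorder}) \<Rightarrow> real^('n::{finite,linorder})^('k::finite) \<Rightarrow> real^('n::{finite,linorder})^('n::{finite,linorder}) \<Rightarrow> real^('n::{finite,linorder})^('k::finite) \<Rightarrow> real^('n::{finite,linorder})^('n::{finite,linorder}) \<Rightarrow> bool" where
  "is_LQ_block X Y U V Q \<longleftrightarrow>
     lower_triangular U \<and> orthogonal_matrix Q \<and> X = U ** Q \<and> Y = V ** Q"

end

theory Submission
  imports Defs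
begin

lemma permutes_le_id:
  fixes p :: "'n::{finite,linorder} \<Rightarrow> 'n"
  assumes pU: "p permutes UNIV" and le: "\<And>i. p i \<le> i"
  shows "p = id"
proof (rule ccontr)
  assume "p \<noteq> id"
  then have ne: "{i. p i \<noteq> i} \<noteq> {}" by (auto simp: fun_eq_iff)
  define i0 where "i0 = Min {i. p i \<noteq> i}"
  have i0in: "p i0 \<noteq> i0" using Min_in[OF _ ne] i0_def by auto
  have lt: "p i0 < i0" using le[of i0] i0in by auto
  have "p (p i0) = p i0"
  proof (rule ccontr)
    assume "p (p i0) \<noteq> p i0"
    then have "i0 \<le> p i0" unfolding i0_def by (intro Min_le) auto
    then show False using lt by auto
  qed
  then have "p i0 = i0" using permutes_inj[OF pU] by (auto dest: injD)
  then show False using i0in by simp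
qed

lemma det_lower:
  fixes A :: "real^('n::{finite,linorder})^('n::{finite,linorder})"
  assumes ld: "\<And>i j. i < j \<Longrightarrow> A$i$j = 0"
  shows "det A = prod (\<lambda>i. A$i$i) (UNIV:: 'n set)"
proof -
  let ?U = "UNIV:: 'n set"
  let ?PU = "{p. p permutes ?U}"
  let ?pp = "\<lambda>p. of_int (sign p) * prod (\<lambda>i. A$i$p i) (UNIV :: 'n set)"
  have fU: "finite ?U"
    by simp
  have id0: "{id} \<subseteq> ?PU"
    by (auto simp: permutes_id)
  have p0: "\<forall>p \<in> ?PU - {id}. ?pp p = 0"
  proof
    fix p
    assume "p \<in> ?PU - {id}"
    then have pp: "p permutes ?U" "p \<noteq> id" by auto
    have "\<not> (\<forall>i. p i \<le> i)" 
    proof (rule notI)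
      assume "\<forall>i. p i \<le> i"
      then have "p = id" using permutes_le_id[OF pp(1)] by simp
      with pp(2) show False by simp
    qed
    then obtain i where "\<not> p i \<le> i" by blast
    then have i: "p i > i" by simp
    from ld[OF i] have "\<exists>i \<in> ?U. A$i$p i = 0"
      by blast
    then have "prod (\<lambda>i. A$i$p i) ?U = 0" by (rule prod_zero[OF fU])
    then show "?pp p = 0" by simp
  qed
  from sum.mono_neutral_cong_left[OF finite_permutations[OF fU] id0 p0] show ?thesis
    unfolding det_def by (simp add: sign_id)
qed

lemma lower_inv:
  fixes U W :: "real^('n::{finite,linorder})^('n::{finite,linorder})"
  assumes L: "lower_triangular U" and UW: "U ** W = mat 1"
  shows "lower_triangular W"
proof -
  have inv: "invertible U" using UW invertible_right_inverse by blast
  have "det U \<noteq> 0" using inv invertible_det_nz by blast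
  then have dg: "U$i$i \<noteq> 0" for i
    using det_lower[of U] L unfolding lower_triangular_def by auto
  show ?thesis unfolding lower_triangular_def
  proof (rule ccontr)
    assume "\<not> (\<forall>i j. i < j \<longrightarrow> W $ i $ j = 0)"
    then have ne: "{i. \<exists>j>i. W$i$j \<noteq> 0} \<noteq> {}" by auto
    define i0 where "i0 = Min {i. \<exists>j>i. W$i$j \<noteq> 0}"
    obtain j where j: "j > i0" "W$i0$j \<noteq> 0" using Min_in[OF _ ne] i0_def by auto
    have small: "W$k$j = 0" if "k < i0" for k
    proof (rule ccontr)
      assume "W$k$j \<noteq> 0"
      then have "k \<in> {i. \<exists>j>i. W$i$j \<noteq> 0}" using that j(1) less_trans by blast
      then have "i0 \<le> k" unfolding i0_def by (intro Min_le) auto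
      then show False using that by auto
    qed
    have "(U ** W)$i0$j = (\<Sum>k\<in>UNIV. if k = i0 then U$i0$i0 * W$i0$j else 0)"
      unfolding matrix_matrix_mult_def vec_lambda_beta
    proof (intro sum.cong refl)
      fix k show "U$i0$k * W$k$j = (if k = i0 then U$i0$i0 * W$i0$j else 0)"
        using L small[of k] unfolding lower_triangular_def
        by (cases k i0 rule: linorder_cases) auto
    qed
    also have "\<dots> = U$i0$i0 * W$i0$j" by simp
    moreover have "(U ** W)$i0$j = 0" using UW j(1) by (simp add: mat_def)
    ultimately have "U$i0$i0 * W$i0$j = 0" by simp
    then show False using dg j by simp
  qed
qed

lemma lower_mult:
  fixes A B :: "real^('n::{finite,linorder})^('n::{finite,linorder})"
  assumes "lower_triangular A" "lower_triangular B"
  shows "lower_triangular (A ** B)"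
  unfolding lower_triangular_def
proof (intro allI impI)
  fix i j :: 'n assume ij: "i < j"
  have "\<forall>k\<in>UNIV. A$i$k * B$k$j = 0"
  proof
    fix k :: 'n
    show "A$i$k * B$k$j = 0"
    proof (cases "k \<le> i")
      case True
      then have "k < j" using ij by simp
      then show ?thesis using assms(2) unfolding lower_triangular_def by simp
    next
      case False
      then have "i < k" by simp
      then show ?thesis using assms(1) unfolding lower_triangular_def by simp
    qed
  qed
  then show "(A ** B)$i$j = 0" unfolding matrix_matrix_mult_def vec_lambda_beta by (rule sum.neutral)
qed


definition mip :: "real^'c^'r \<Rightarrow> real^'c^'r \<Rightarrow> real" where
  "mip A B = trace (transpose A ** B)"

lemma mip_sum: "mip A B = (\<Sum>i\<in>UNIV. \<Sum>k\<in>UNIV. A$k$i * B$k$i)"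
  by (simp add: mip_def trace_def matrix_matrix_mult_def transpose_def)

lemma mip_add_right: "mip A (B + C) = mip A B + mip A C"
  by (simp add: mip_sum sum.distrib algebra_simps)
lemma mip_add_left: "mip (A + B) C = mip A C + mip B C"
  by (simp add: mip_sum sum.distrib algebra_simps)
lemma mip_diff_left: "mip (A - B) C = mip A C - mip B C"
  by (simp add: mip_sum sum_subtractf algebra_simps)
lemma mip_neg_right: "mip A (- B) = - mip A B"
  by (simp add: mip_sum sum_negf)

lemma mip_mult_left: "mip (B ** A) C = mip A (transpose B ** C)"
  by (simp add: mip_def matrix_transpose_mul matrix_mul_assoc)

lemma mip_mult_right: "mip A (B ** C) = mip (A ** transpose C) B"
proof -
  have "mip A (B ** C) = trace ((transpose A ** B) ** C)" by (simp add: mip_def matrix_mul_assoc)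
  also have "\<dots> = trace (C ** (transpose A ** B))" by (rule trace_mul_sym)
  also have "\<dots> = mip (A ** transpose C) B" by (simp add: mip_def matrix_transpose_mul matrix_mul_assoc)
  finally show ?thesis .
qed

lemma mip_mult_left2: "mip (A ** C) B = mip A (B ** transpose C)"
proof -
  have "mip (A ** C) B = trace (transpose C ** (transpose A ** B))"
    by (simp add: mip_def matrix_transpose_mul matrix_mul_assoc)
  also have "\<dots> = trace ((transpose A ** B) ** transpose C)" by (rule trace_mul_sym)
  also have "\<dots> = mip A (B ** transpose C)" by (simp add: mip_def matrix_mul_assoc)
  finally show ?thesis .
qed

lemma mip_transpose: "mip A B = mip (transpose A) (transpose B)"
  by (simp add: mip_sum transpose_def) (rule sum.swap)

lemma mip_sym_skew:
  assumes "transpose S = S" "transpose W = - W"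
  shows "mip S W = 0"
proof -
  have "mip S W = mip (transpose S) (transpose W)" by (rule mip_transpose)
  also have "\<dots> = - mip S W" using assms by (simp add: mip_neg_right)
  finally show ?thesis by simp
qed

lemma mip_upper_lower:
  fixes K D :: "real^('n::{finite,linorder})^('n::{finite,linorder})"
  assumes "lower_triangular D" "\<And>i j. j \<le> i \<Longrightarrow> K$i$j = 0"
  shows "mip K D = 0"
proof -
  have z: "K$k$i * D$k$i = 0" for k i
  proof (cases "i \<le> k")
    case True then show ?thesis using assms(2) by simp
  next
    case False then have "k < i" by simp
    then show ?thesis using assms(1) unfolding lower_triangular_def by simp
  qed
  show ?thesis unfolding mip_sum by (simp only: z sum.neutral_const)
qed

lemma copyltu_sym: "transpose (copyltu M) = copyltu M"
  by (simp add: copyltu_def transpose_def vec_eq_iff max.commute min.commute)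

lemma copyltu_minus: "mip (copyltu M) D = mip M D" if "lower_triangular D"
proof -
  have "mip (copyltu M - M) D = 0"
    by (rule mip_upper_lower[OF that]) (simp add: copyltu_def max_def min_def)
  then show ?thesis by (simp add: mip_diff_left)
qed

lemma bl_mm: "bounded_bilinear (\<lambda>(A::real^'n^'m) (B::real^'p^'n). A ** B)"
proof -
  have "bilinear (\<lambda>(A::real^'n^'m) (B::real^'p^'n). A ** B)"
    unfolding bilinear_def
    by (intro conjI allI linearI)
     (simp_all add: vec_eq_iff matrix_matrix_mult_def sum.distrib algebra_simps sum_distrib_left scaleR_sum_right)
  then show ?thesis using bilinear_conv_bounded_bilinear by blast
qed
lemma bl_tr: "bounded_linear (transpose :: real^'n^'m \<Rightarrow> _)"
  by (intro linear_conv_bounded_linear[THEN iffD1] linearI) (simp_all add: vec_eq_iff transpose_def)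

lemma tr_add: "transpose (A + B) = transpose A + transpose (B :: real^'a^'b)"
  by (simp add: vec_eq_iff transpose_def)

lemma deriv_eq:
  assumes "(f has_derivative f') (at x)" "(g has_derivative g') (at x)" "open S" "x \<in> S"
    "\<And>y. y \<in> S \<Longrightarrow> f y = g y"
  shows "f' = g'"
proof -
  have "(g has_derivative f') (at x)"
    using has_derivative_transform_within_open[OF assms(1) assms(3) assms(4) assms(5)] by simp
  then show ?thesis using has_derivative_unique assms(2) by blast
qed

theorem proposition3:
  fixes X :: "real^('n::{finite,linorder})^('n::{finite,linorder})"
    and Y :: "real^('n::{finite,linorder})^('k::finite)"
    and Uf Qf :: "(real^('n::{finite,linorder})^('n::{finite,linorder})) \<times> (real^('n::{finite,linorder})^('k::finite)) \<Rightarrow> real^('n::{finite,linorder})^('n::{finite,linorder})"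
    and Vf :: "(real^('n::{finite,linorder})^('n::{finite,linorder})) \<times> (real^('n::{finite,linorder})^('k::finite)) \<Rightarrow> real^('n::{finite,linorder})^('k::finite)"
    and dUf dQf :: "(real^('n::{finite,linorder})^('n::{finite,linorder})) \<times> (real^('n::{finite,linorder})^('k::finite)) \<Rightarrow> real^('n::{finite,linorder})^('n::{finite,linorder})"
    and dVf :: "(real^('n::{finite,linorder})^('n::{finite,linorder})) \<times> (real^('n::{finite,linorder})^('k::finite)) \<Rightarrow> real^('n::{finite,linorder})^('k::finite)"
    and S :: "((real^('n::{finite,linorder})^('n::{finite,linorder})) \<times> (real^('n::{finite,linorder})^('k::finite))) set"
    and Ubar Qbar :: "real^('n::{finite,linorder})^('n::{finite,linorder})" and Vbar :: "real^('n::{finite,linorder})^('k::finite)"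
  assumes X_inv: "invertible X"
    and S_open: "open S" and A_in: "(X, Y) \<in> S"
    and LQ: "\<And>X' Y'. (X', Y') \<in> S \<Longrightarrow>
               is_LQ_block X' Y' (Uf (X', Y')) (Vf (X', Y')) (Qf (X', Y'))"
    and dU: "(Uf has_derivative dUf) (at (X, Y))"
    and dV: "(Vf has_derivative dVf) (at (X, Y))"
    and dQ: "(Qf has_derivative dQf) (at (X, Y))"
  defines "U \<equiv> Uf (X, Y)" and "V \<equiv> Vf (X, Y)" and "Q \<equiv> Qf (X, Y)"
  defines "Qbar' \<equiv> Qbar + transpose Vbar ** Y"
  defines "M \<equiv> transpose U ** Ubar - Qbar' ** transpose Q"
  defines "Xbar \<equiv> transpose (matrix_inv U) ** (Qbar' + copyltu M ** Q)"
  defines "Ybar \<equiv> Vbar ** Q"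
  shows "\<forall>dX dY.
           trace (transpose Xbar ** dX) + trace (transpose Ybar ** dY) =
           trace (transpose Ubar ** dUf (dX, dY)) + trace (transpose Vbar ** dVf (dX, dY))
           + trace (transpose Qbar ** dQf (dX, dY))"
proof (intro allI)
  fix dX dY
  have LQ': "\<And>p. p \<in> S \<Longrightarrow> is_LQ_block (fst p) (snd p) (Uf p) (Vf p) (Qf p)"
    using LQ by (metis prod.collapse)
  have LQ0: "is_LQ_block X Y U V Q" using LQ[OF A_in] by (simp add: U_def V_def Q_def)
  then have LU: "lower_triangular U" and orth: "orthogonal_matrix Q" and XUQ: "X = U ** Q"
    and YVQ: "Y = V ** Q" by (auto simp: is_LQ_block_def)
  have QtQ: "transpose Q ** Q = mat 1" and QQt: "Q ** transpose Q = mat 1"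
    using orth by (auto simp: orthogonal_matrix_def)
  have "X ** transpose Q = U" using XUQ QQt by (simp add: matrix_mul_assoc[symmetric])
  moreover have "invertible (transpose Q)" using QtQ QQt unfolding invertible_def by blast
  ultimately have Uinv: "invertible U" using invertible_mult[OF X_inv] by metis
  define W where "W = matrix_inv U"
  have "U ** W = mat 1 \<and> W ** U = mat 1"
    using Uinv unfolding invertible_def W_def matrix_inv_def by (rule someI_ex)
  then have UW: "U ** W = mat 1" and WU: "W ** U = mat 1" by auto
  have LW: "lower_triangular W" by (rule lower_inv[OF LU UW])
  have D1: "(\<lambda>h. Uf (X,Y) ** dQf h + dUf h ** Qf (X,Y)) = fst"
    by (rule deriv_eq[OF bounded_bilinear.FDERIV[OF bl_mm dU dQ] has_derivative_fst[OF has_derivative_ident] S_open A_in])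
      (use LQ' in \<open>auto simp: is_LQ_block_def\<close>)
  have D2: "(\<lambda>h. Vf (X,Y) ** dQf h + dVf h ** Qf (X,Y)) = snd"
    by (rule deriv_eq[OF bounded_bilinear.FDERIV[OF bl_mm dV dQ] has_derivative_snd[OF has_derivative_ident] S_open A_in])
      (use LQ' in \<open>auto simp: is_LQ_block_def\<close>)
  have D3: "(\<lambda>h. Qf (X,Y) ** transpose (dQf h) + dQf h ** transpose (Qf (X,Y))) = (\<lambda>h. 0)"
    by (rule deriv_eq[OF bounded_bilinear.FDERIV[OF bl_mm dQ bounded_linear.has_derivative[OF bl_tr dQ]]
          has_derivative_const[of "mat 1"] S_open A_in])
      (use LQ' in \<open>auto simp: is_LQ_block_def orthogonal_matrix_def\<close>)
  have D4: "(\<lambda>h. dUf h $ i $ j) = (\<lambda>h. 0)" if ij: "i < j" for i j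
  proof -
    have bl: "bounded_linear (\<lambda>A. A $ i $ j :: real)"
      by (rule bounded_linear_compose[OF bounded_linear_vec_nth[of j] bounded_linear_vec_nth[of i]])
    show ?thesis
      by (rule deriv_eq[OF bounded_linear.has_derivative[OF bl dU] has_derivative_const[of 0] S_open A_in])
        (use LQ' ij in \<open>auto simp: is_LQ_block_def lower_triangular_def\<close>)
  qed
  define dU where "dU = dUf (dX, dY)"
  define dV where "dV = dVf (dX, dY)"
  define dQ where "dQ = dQf (dX, dY)"
  have e1: "dX = U ** dQ + dU ** Q" using fun_cong[OF D1, of "(dX,dY)"] by (simp add: U_def Q_def dU_def dQ_def)
  have e2: "dY = V ** dQ + dV ** Q" using fun_cong[OF D2, of "(dX,dY)"] by (simp add: V_def Q_def dV_def dQ_def)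
  have e3: "Q ** transpose dQ + dQ ** transpose Q = 0" using fun_cong[OF D3, of "(dX,dY)"] by (simp add: Q_def dQ_def)
  have e4: "lower_triangular dU" unfolding lower_triangular_def dU_def
  proof (intro allI impI)
    fix i j :: 'n assume "i < j"
    from fun_cong[OF D4[OF this], of "(dX,dY)"] show "dUf (dX, dY) $ i $ j = 0" by simp
  qed
  define D where "D = W ** dU"
  have LD: "lower_triangular D" unfolding D_def by (rule lower_mult[OF LW e4])
  have dUD: "dU = U ** D" unfolding D_def by (simp add: matrix_mul_assoc UW)
  have WdX: "W ** dX = dQ + D ** Q"
    by (simp add: e1 D_def matrix_add_ldistrib matrix_mul_assoc WU)
  define Om where "Om = dQ ** transpose Q"
  have skew: "transpose Om = - Om"
    using e3 by (simp add: Om_def matrix_transpose_mul eq_neg_iff_add_eq_0 add.commute)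
  define G where "G = Qbar' + copyltu M ** Q"
  have T1: "mip Xbar dX = mip G dQ + mip (Qbar' ** transpose Q) D + mip M D"
  proof -
    have "mip Xbar dX = mip G (W ** dX)" using mip_mult_left[of "transpose W" G dX] by (simp add: Xbar_def G_def W_def)
    also have "\<dots> = mip G dQ + mip (G ** transpose Q) D" by (simp add: WdX mip_add_right mip_mult_right[of G D Q])
    also have "G ** transpose Q = Qbar' ** transpose Q + copyltu M"
      by (simp add: G_def bounded_bilinear.add_left[OF bl_mm] matrix_mul_assoc[symmetric] QQt)
    finally show ?thesis by (simp add: mip_add_left copyltu_minus[OF LD])
  qed
  have T2: "mip Ybar dY = mip (transpose V ** (Vbar ** Q)) dQ + mip Vbar dV"
  proof -
    have a: "mip (Vbar ** Q) (V ** dQ) = mip (transpose V ** (Vbar ** Q)) dQ"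
      using mip_mult_left[of "transpose V" "Vbar ** Q" dQ] by simp
    have b: "mip (Vbar ** Q) (dV ** Q) = mip Vbar dV"
      using mip_mult_right[of "Vbar ** Q" dV Q] by (simp add: matrix_mul_assoc[symmetric] QQt)
    show ?thesis unfolding Ybar_def e2 mip_add_right a b ..
  qed
  have T3: "mip Ubar dU = mip M D + mip (Qbar' ** transpose Q) D"
  proof -
    have "mip Ubar dU = mip (transpose U ** Ubar) D"
      using mip_mult_left[of "transpose U" Ubar D] by (simp add: dUD)
    also have "transpose U ** Ubar = M + Qbar' ** transpose Q" by (simp add: M_def)
    finally show ?thesis by (simp add: mip_add_left)
  qed
  have Z: "mip G dQ + mip (transpose V ** (Vbar ** Q)) dQ = mip Qbar dQ"
  proof -
    have sym: "transpose (transpose Vbar ** V + copyltu M + transpose V ** Vbar) = transpose Vbar ** V + copyltu M + transpose V ** Vbar"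
      by (simp add: tr_add copyltu_sym matrix_transpose_mul)
    have "mip G dQ + mip (transpose V ** (Vbar ** Q)) dQ
       = mip Qbar dQ + mip ((transpose Vbar ** V + copyltu M + transpose V ** Vbar) ** Q) dQ"
      by (simp add: G_def Qbar'_def YVQ mip_add_left bounded_bilinear.add_left[OF bl_mm] matrix_mul_assoc)
    also have "mip ((transpose Vbar ** V + copyltu M + transpose V ** Vbar) ** Q) dQ
       = mip (transpose Vbar ** V + copyltu M + transpose V ** Vbar) Om"
      by (simp add: mip_mult_left2[of _ Q dQ] Om_def)
    also have "\<dots> = 0" by (rule mip_sym_skew[OF sym skew])
    finally show ?thesis by simp
  qed
  show "trace (transpose Xbar ** dX) + trace (transpose Ybar ** dY) =
           trace (transpose Ubar ** dUf (dX, dY)) + trace (transpose Vbar ** dVf (dX, dY))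
           + trace (transpose Qbar ** dQf (dX, dY))"
    using T1 T2 T3 Z unfolding mip_def[symmetric] dU_def[symmetric] dV_def[symmetric] dQ_def[symmetric]
    by linarith
qed

end
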